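(* Consider an $a\times b$ grid of unit cells with $\ell = a+b$ a power of two, and any monotone path $\gamma$ through the grid. Then the region under $\gamma$ can be decomposed into disjoint axis-parallel rectangles (each a union of grid cells) such that the sum of the perimeters of these rectangles is $O(\ell\log \ell)$.
   Context: A monotone path is a path along grid lines from the bottom-left corner to the top-right corner of the grid that only moves up or right. The region under $\gamma$ is the set of grid cells lying below (equivalently, to the lower right of) $\gamma$. *)

theory Defs
  imports Main "HOL.Transcendental"
begin

text \<open>Grid: cell (i,j) is the unit square [i,i+1] x [j,j+1], with 0 <= i < a (column)
and 0 <= j < b (row). A monotone path from (0,0) to (a,b) is a list of unit steps,
True = right step, False = up step.\<close>

type_synonym cell = "nat \<times> nat"

definition monotone_path :: "nat \<Rightarrow> nat \<Rightarrow> bool list \<Rightarrow> bool" where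
  "monotone_path a b p \<longleftrightarrow> length p = a + b \<and> length (filter id p) = a"

text \<open>The k-th step, if it is a right step, traverses column (number of right steps before k)
at height (number of up steps before k); the cells of that column strictly below this height
lie under the path.\<close>

definition region_under :: "nat \<Rightarrow> nat \<Rightarrow> bool list \<Rightarrow> cell set" where
  "region_under a b p = {(i, j). i < a \<and> j < b \<and>
     (\<exists>k < length p. p ! k \<and> length (filter id (take k p)) = i
                      \<and> j < length (filter Not (take k p)))}"

type_synonym rect = "nat \<times> nat \<times> nat \<times> nat"

definition rect_cells :: "rect \<Rightarrow> cell set" where
  "rect_cells r = (case r of (x0, x1, y0, y1) \<Rightarrow> {x0..<x1} \<times> {y0..<y1})"

definition rect_nonempty :: "rect \<Rightarrow> bool" where
  "rect_nonempty r = (case r of (x0, x1, y0, y1) \<Rightarrow> x0 < x1 \<and> y0 < y1)"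

definition perimeter :: "rect \<Rightarrow> nat" where
  "perimeter r = (case r of (x0, x1, y0, y1) \<Rightarrow> 2 * ((x1 - x0) + (y1 - y0)))"

definition rect_decomposition :: "rect set \<Rightarrow> cell set \<Rightarrow> bool" where
  "rect_decomposition R S \<longleftrightarrow> finite R \<and> (\<forall>r\<in>R. rect_nonempty r)
     \<and> (\<forall>r\<in>R. \<forall>s\<in>R. r \<noteq> s \<longrightarrow> rect_cells r \<inter> rect_cells s = {})
     \<and> (\<Union>r\<in>R. rect_cells r) = S"

end

theory Submission
  imports Defs
begin
lemma count_mono: "k \<le> k' \<Longrightarrow> length (filter P (take k xs)) \<le> length (filter P (take k' xs))"
proof -
  assume "k \<le> k'"
  then have "take k' xs = take k xs @ drop k (take k' xs)"
    by (metis append_take_drop_id min.absorb1 take_take)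
  then show ?thesis by (metis filter_append le_add1 length_append)
qed

lemma exists_kth_true: "i < length (filter id p) \<Longrightarrow> \<exists>k<length p. p!k \<and> length (filter id (take k p)) = i"
proof (induction p arbitrary: i)
  case Nil then show ?case by simp
next
  case (Cons x p)
  show ?case
  proof (cases x)
    case True
    show ?thesis
    proof (cases i)
      case 0 then show ?thesis using True by (intro exI[of _ 0]) simp
    next
      case (Suc i')
      with Cons.prems True have "i' < length (filter id p)" by (simp add: id_def)
      from Cons.IH[OF this] obtain k where "k<length p" "p!k" "length (filter id (take k p)) = i'" by blast
      then show ?thesis using True Suc by (intro exI[of _ "Suc k"]) (simp add: id_def)
    qed
  next
    case False
    with Cons.prems have "i < length (filter id p)" by (simp add: id_def)
    from Cons.IH[OF this] obtain k where "k<length p" "p!k" "length (filter id (take k p)) = i" by blast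
    then show ?thesis using False by (intro exI[of _ "Suc k"]) (simp add: id_def)
  qed
qed

lemma region_right:
  assumes mp: "monotone_path a b p" and r: "(i,j) \<in> region_under a b p" and "i \<le> i'" "i' < a"
  shows "(i',j) \<in> region_under a b p"
proof (cases "i = i'")
  case True then show ?thesis using r by simp
next
  case False
  from r obtain k where k: "k < length p" "p!k" "length (filter id (take k p)) = i"
     "j < length (filter Not (take k p))" and ij: "j < b" unfolding region_under_def by auto
  from mp \<open>i' < a\<close> have "i' < length (filter id p)" unfolding monotone_path_def by simp
  from exists_kth_true[OF this] obtain k' where k': "k'<length p" "p!k'" "length (filter id (take k' p)) = i'" by blast
  have "k \<le> k'"
  proof (rule ccontr)
    assume "\<not> k \<le> k'"
    then have "k' \<le> k" by simp
    from count_mono[OF this, of id p] k k' \<open>i \<le> i'\<close> False show False by simp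
  qed
  from count_mono[OF this, of Not p] k have "j < length (filter Not (take k' p))" by simp
  then show ?thesis using k' ij \<open>i' < a\<close> unfolding region_under_def by auto
qed

lemma region_down:
  assumes r: "(i,j) \<in> region_under a b p" and "j' \<le> j"
  shows "(i,j') \<in> region_under a b p"
  using assms unfolding region_under_def by fastforce

lemma region_sub: "(i,j) \<in> region_under a b p \<Longrightarrow> i < a \<and> j < b"
  unfolding region_under_def by auto

lemma abstract_f:
  fixes R :: "cell set"
  assumes sub: "\<And>i j. (i,j) \<in> R \<Longrightarrow> i < a \<and> j < b"
    and down: "\<And>i j j'. (i,j) \<in> R \<Longrightarrow> j' \<le> j \<Longrightarrow> (i,j') \<in> R"
    and right: "\<And>i j i'. (i,j) \<in> R \<Longrightarrow> i \<le> i' \<Longrightarrow> i' < a \<Longrightarrow> (i',j) \<in> R"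
  shows "\<exists>f. mono f \<and> (\<forall>i. f i \<le> b) \<and> R = {(i,j). i < a \<and> j < f i}"
proof -
  define f where "f i = (if i < a then (LEAST j. (i,j) \<notin> R) else b)" for i
  have nb: "(i,b) \<notin> R" for i using sub by blast
  have fb: "f i \<le> b" for i unfolding f_def using nb by (auto intro: Least_le)
  have mem: "(i,j) \<in> R \<longleftrightarrow> i < a \<and> j < f i" for i j
  proof
    assume "(i,j) \<in> R"
    then have "i < a" using sub by blast
    moreover have "\<not> (LEAST j. (i,j) \<notin> R) \<le> j"
    proof
      assume "(LEAST j. (i,j) \<notin> R) \<le> j"
      moreover have "(i, LEAST j. (i,j) \<notin> R) \<notin> R" using nb by (rule LeastI)
      ultimately show False using down \<open>(i,j) \<in> R\<close> by blast
    qed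
    ultimately show "i < a \<and> j < f i" unfolding f_def by simp
  next
    assume "i < a \<and> j < f i"
    then show "(i,j) \<in> R" unfolding f_def using not_less_Least[of j "\<lambda>j. (i,j) \<notin> R"] by auto
  qed
  have "mono f"
  proof (rule monoI)
    fix i i' :: nat assume "i \<le> i'"
    show "f i \<le> f i'"
    proof (cases "i' < a")
      case True
      then have "i < a" using \<open>i \<le> i'\<close> by simp
      have "(i', f i') \<notin> R" using mem by simp
      then have "(i, f i') \<notin> R" using right \<open>i \<le> i'\<close> True by blast
      then show ?thesis using \<open>i < a\<close> True unfolding f_def by (auto intro: Least_le)
    next
      case False then show ?thesis using fb by (simp add: f_def)
    qed
  qed
  then show ?thesis using fb mem by blast
qed

fun dec :: "(nat\<Rightarrow>nat) \<Rightarrow> nat \<Rightarrow> nat \<Rightarrow> nat \<Rightarrow> nat \<Rightarrow> rect set" where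
  "dec f a 0 x0 y0 = (if x0 < a \<and> y0 < f x0 then {(x0, Suc x0, y0, f x0)} else {})"
| "dec f a (Suc n) x0 y0 = dec f a n x0 y0 \<union>
     (if x0 + 2^n < a then
        (if y0 < f (x0+2^n) then {(x0+2^n, min (x0 + 2^Suc n) a, y0, f (x0+2^n))} else {})
        \<union> dec f a n (x0+2^n) (max y0 (f (x0+2^n)))
      else {})"

definition S :: "(nat\<Rightarrow>nat) \<Rightarrow> nat \<Rightarrow> nat \<Rightarrow> nat \<Rightarrow> nat \<Rightarrow> cell set" where
  "S f a x0 x1 y0 = {(i,j). x0 \<le> i \<and> i < x1 \<and> i < a \<and> y0 \<le> j \<and> j < f i}"

lemma sum_Un_le': "finite A \<Longrightarrow> finite B \<Longrightarrow> sum (g::'a\<Rightarrow>nat) (A \<union> B) \<le> sum g A + sum g B"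
  by (simp add: sum_Un_nat)

lemma dec_fin: "finite (dec f a n x0 y0)"
  by (induction n arbitrary: x0 y0) auto

lemma dec_ne: "r \<in> dec f a n x0 y0 \<Longrightarrow> rect_nonempty r"
  by (induction n arbitrary: x0 y0) (auto simp: rect_nonempty_def split: if_splits)

lemma dec_union:
  assumes "mono f"
  shows "(\<Union>r\<in>dec f a n x0 y0. rect_cells r) = S f a x0 (x0 + 2^n) y0"
proof (induction n arbitrary: x0 y0)
  case 0
  show ?case by (auto simp: S_def rect_cells_def less_Suc_eq)
next
  case (Suc n)
  let ?m = "x0 + 2^n"
  have fm: "i \<ge> ?m \<Longrightarrow> f ?m \<le> f i" for i using assms by (simp add: mono_def)
  show ?case
  proof (cases "?m < a")
    case True
    have "S f a x0 (x0 + 2^Suc n) y0 = S f a x0 ?m y0 \<union>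
       ((if y0 < f ?m then rect_cells (?m, min (x0 + 2^Suc n) a, y0, f ?m) else {}) \<union>
         S f a ?m (?m + 2^n) (max y0 (f ?m)))"
      apply (auto simp: S_def rect_cells_def)
      apply (erule less_le_trans, rule fm, assumption)
      done
    moreover have "dec f a (Suc n) x0 y0 = dec f a n x0 y0 \<union>
        ((if y0 < f ?m then {(?m, min (x0 + 2^Suc n) a, y0, f ?m)} else {}) \<union> dec f a n ?m (max y0 (f ?m)))"
      using True by simp
    moreover have "(\<Union>r\<in>(if y0 < f ?m then {(?m, min (x0 + 2^Suc n) a, y0, f ?m)} else {}). rect_cells r)
        = (if y0 < f ?m then rect_cells (?m, min (x0 + 2^Suc n) a, y0, f ?m) else {})" by simp
    ultimately show ?thesis by (simp only: UN_Un Suc.IH)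
  next
    case False
    have "S f a x0 (x0 + 2^Suc n) y0 = S f a x0 ?m y0" using False by (auto simp: S_def)
    then show ?thesis using False Suc.IH by auto
  qed
qed

lemma dec_sub:
  assumes "mono f" "r \<in> dec f a n x0 y0"
  shows "rect_cells r \<subseteq> S f a x0 (x0 + 2^n) y0"
  using dec_union[OF assms(1), of a n x0 y0] assms(2) by blast

lemma dec_disj:
  assumes "mono f"
  shows "\<forall>r\<in>dec f a n x0 y0. \<forall>s\<in>dec f a n x0 y0. r \<noteq> s \<longrightarrow> rect_cells r \<inter> rect_cells s = {}"
proof (induction n arbitrary: x0 y0)
  case 0
  show ?case by auto
next
  case (Suc n)
  let ?m = "x0 + 2^n"
  let ?L = "dec f a n x0 y0"
  let ?Q = "(if y0 < f ?m then {(?m, min (x0 + 2^Suc n) a, y0, f ?m)} else {})"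
  let ?Rt = "dec f a n ?m (max y0 (f ?m))"
  have LR: "rect_cells r \<inter> rect_cells s = {}" if "r \<in> ?L" "s \<in> ?Q \<union> ?Rt" for r s
  proof -
    have "rect_cells r \<subseteq> S f a x0 ?m y0" using dec_sub[OF assms that(1)] .
    then have "rect_cells r \<subseteq> {p. fst p < ?m}" by (auto simp: S_def)
    moreover have "rect_cells s \<subseteq> {(i,j). i \<ge> ?m}"
    proof (cases "s \<in> ?Q")
      case True then show ?thesis by (auto simp: rect_cells_def split: if_splits)
    next
      case False then have "s \<in> ?Rt" using that by blast
      from dec_sub[OF assms this] show ?thesis by (auto simp: S_def)
    qed
    ultimately show ?thesis by fastforce
  qed
  have QR: "rect_cells r \<inter> rect_cells s = {}" if "r \<in> ?Q" "s \<in> ?Rt" for r s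
  proof -
    have 1: "rect_cells r \<subseteq> {p. snd p < f ?m}" using that(1) by (auto simp: rect_cells_def split: if_splits)
    from dec_sub[OF assms that(2)] have 2: "rect_cells s \<subseteq> {p. snd p \<ge> f ?m}" by (auto simp: S_def)
    { fix p assume "p \<in> rect_cells r" "p \<in> rect_cells s"
      with 1 2 have "snd p < f ?m" "f ?m \<le> snd p" by auto
      hence False by simp }
    then show ?thesis by blast
  qed
  show ?case
  proof (cases "?m < a")
    case True
    have e: "dec f a (Suc n) x0 y0 = ?L \<union> (?Q \<union> ?Rt)" using True by simp
    show ?thesis unfolding e
    proof (intro ballI impI)
      fix r s assume r: "r \<in> ?L \<union> (?Q \<union> ?Rt)" and s: "s \<in> ?L \<union> (?Q \<union> ?Rt)" and rs: "r \<noteq> s"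
      consider "r\<in>?L" "s\<in>?L" | "r\<in>?L" "s\<in>?Q\<union>?Rt" | "s\<in>?L" "r\<in>?Q\<union>?Rt" | "r\<in>?Q" "s\<in>?Q"
        | "r\<in>?Q" "s\<in>?Rt" | "s\<in>?Q" "r\<in>?Rt" | "r\<in>?Rt" "s\<in>?Rt" using r s by blast
      then show "rect_cells r \<inter> rect_cells s = {}"
      proof cases
        case 1 then show ?thesis using Suc.IH[of x0 y0] rs by blast
      next
        case 2 then show ?thesis using LR by blast
      next
        case 3 then show ?thesis using LR[of s r] by blast
      next
        case 4 then show ?thesis using rs by (auto split: if_splits)
      next
        case 5 then show ?thesis using QR by blast
      next
        case 6 then show ?thesis using QR[of s r] by blast
      next
        case 7 then show ?thesis using Suc.IH[of ?m "max y0 (f ?m)"] rs by blast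
      qed
    qed
  next
    case False
    then show ?thesis using Suc.IH[of x0 y0] by simp
  qed
qed

lemma dec_perim:
  assumes "mono f"
  shows "(\<Sum>r\<in>dec f a n x0 y0. perimeter r) \<le> 2*(n+1)*2^n + 2*(n+1)*(f (x0+2^n-1) - y0)"
proof (induction n arbitrary: x0 y0)
  case 0
  show ?case by (auto simp: perimeter_def)
next
  case (Suc n)
  let ?m = "x0 + 2^n"
  let ?N = "2^n :: nat"
  let ?L = "dec f a n x0 y0"
  let ?Q = "(if y0 < f ?m then {(?m, min (x0 + 2^Suc n) a, y0, f ?m)} else {})"
  let ?Rt = "dec f a n ?m (max y0 (f ?m))"
  define T where "T = f (x0 + 2^Suc n - 1)"
  have N1: "?N \<ge> 1" by simp
  have f1: "f (x0 + ?N - 1) \<le> f ?m" using assms by (simp add: mono_def)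
  have "?m \<le> x0 + 2^Suc n - 1" using N1 by (simp; linarith)
  then have f2: "f ?m \<le> T" unfolding T_def using assms by (simp add: mono_def)
  have f3: "f (?m + ?N - 1) = T" unfolding T_def by (simp add: algebra_simps mult_2)
  define u where "u = f (x0 + ?N - 1) - y0"
  define v where "v = T - max y0 (f ?m)"
  define w where "w = f ?m - y0"
  define D where "D = T - y0"
  have uv: "u + v \<le> D" unfolding u_def v_def D_def using f1 f2 by linarith
  have wD: "w \<le> D" unfolding w_def D_def using f2 by linarith
  have sL: "(\<Sum>r\<in>?L. perimeter r) \<le> 2*(n+1)*?N + 2*(n+1)*u" using Suc.IH unfolding u_def .
  have sR: "(\<Sum>r\<in>?Rt. perimeter r) \<le> 2*(n+1)*?N + 2*(n+1)*v" using Suc.IH[of ?m] unfolding v_def f3 .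
  have sQ: "(\<Sum>r\<in>?Q. perimeter r) \<le> 2*(?N + w)" unfolding w_def by (auto simp: perimeter_def)
  have key: "(n+1)*(u+v) \<le> (n+1)*D" using uv by (rule mult_le_mono2)
  have fin: "finite ?L" "finite ?Q" "finite ?Rt" using dec_fin by auto
  show ?case
  proof (cases "?m < a")
    case True
    have e: "dec f a (Suc n) x0 y0 = ?L \<union> (?Q \<union> ?Rt)" using True by simp
    have "(\<Sum>r\<in>dec f a (Suc n) x0 y0. perimeter r) \<le> (\<Sum>r\<in>?L. perimeter r) + ((\<Sum>r\<in>?Q. perimeter r) + (\<Sum>r\<in>?Rt. perimeter r))"
      unfolding e using fin sum_Un_le'[of ?Q ?Rt perimeter] sum_Un_le'[of ?L "?Q \<union> ?Rt" perimeter] by simp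
    also have "\<dots> \<le> 2*(Suc n+1)*2^Suc n + 2*(Suc n+1)*D"
      using sL sR sQ key wD by (simp add: algebra_simps)
    finally show ?thesis unfolding D_def T_def .
  next
    case False
    have "(\<Sum>r\<in>dec f a (Suc n) x0 y0. perimeter r) = (\<Sum>r\<in>?L. perimeter r)" using False by simp
    also have "\<dots> \<le> 2*(Suc n+1)*2^Suc n + 2*(Suc n+1)*D"
      using sL uv mult_le_mono2[of u D "n+1"] by (simp add: algebra_simps)
    finally show ?thesis unfolding D_def T_def .
  qed
qed

theorem mainTheorem4:
  shows "\<exists>C::real. \<forall>a b :: nat. \<forall>\<gamma> :: bool list.
           (\<exists>k::nat. a + b = 2 ^ k) \<longrightarrow> monotone_path a b \<gamma> \<longrightarrow>
           (\<exists>R. rect_decomposition R (region_under a b \<gamma>) \<and>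
                real (\<Sum>r\<in>R. perimeter r) \<le> C * real (a + b) * log 2 (real (a + b)))"
proof (intro exI[of _ 8] allI impI)
  fix a b :: nat and \<gamma> :: "bool list"
  assume "\<exists>k::nat. a + b = 2 ^ k" and mp: "monotone_path a b \<gamma>"
  then obtain k where k: "a + b = 2^k" by blast
  have lg: "log 2 (real (a + b)) = real k" unfolding k by (simp add: log_nat_power)
  show "\<exists>R. rect_decomposition R (region_under a b \<gamma>) \<and>
                real (\<Sum>r\<in>R. perimeter r) \<le> 8 * real (a + b) * log 2 (real (a + b))"
  proof (cases "a = 0 \<or> b = 0")
    case True
    then have "region_under a b \<gamma> = {}" using region_sub by fastforce
    then have "rect_decomposition {} (region_under a b \<gamma>)" unfolding rect_decomposition_def by simp
    then show ?thesis using lg by (intro exI[of _ "{}"]) simp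
  next
    case False
    then have "2^k \<ge> (2::nat)" using k by simp
    then have k1: "k \<ge> 1" by (cases k) auto
    obtain f where f: "mono f" "\<forall>i. f i \<le> b" and reg: "region_under a b \<gamma> = {(i,j). i < a \<and> j < f i}"
      using abstract_f[of "region_under a b \<gamma>" a b] region_sub region_down region_right[OF mp] by blast
    define R where "R = dec f a k 0 0"
    have ale: "a \<le> 2^k" using k by linarith
    have "S f a 0 (0 + 2^k) 0 = region_under a b \<gamma>" unfolding reg S_def using ale by auto
    then have dec: "rect_decomposition R (region_under a b \<gamma>)"
      unfolding rect_decomposition_def R_def
      using dec_fin[of f a k 0 0] dec_ne[of _ f a k 0 0] dec_disj[OF f(1), of a k 0 0] dec_union[OF f(1), of a k 0 0]
      by simp
    have "(\<Sum>r\<in>R. perimeter r) \<le> 2*(k+1)*2^k + 2*(k+1)*(f (0+2^k-1) - 0)"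
      unfolding R_def by (rule dec_perim[OF f(1)])
    also have "\<dots> \<le> 2*(k+1)*2^k + 2*(k+1)*b" using f(2) mult_le_mono2[of "f (0+2^k-1)" b "2*(k+1)"] by simp
    also have "\<dots> \<le> 2*(k+1)*2^k + 2*(k+1)*2^k" using mult_le_mono2[of b "2^k" "2*(k+1)"] k by simp
    also have "\<dots> \<le> 8 * 2^k * k" using k1 by (simp add: algebra_simps)
    finally have "real (\<Sum>r\<in>R. perimeter r) \<le> real (8 * 2^k * k)" by (simp only: of_nat_le_iff)
    then have "real (\<Sum>r\<in>R. perimeter r) \<le> 8 * real (a + b) * log 2 (real (a + b))"
      unfolding lg k by simp
    then show ?thesis using dec by blast
  qed
qed

end
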